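(* Let $Q$ be a finite acyclic quiver, $\mathbf d\in\mathbb{N}Q_0$, $0\neq\Theta\in(\mathbb{Z}Q_0)^*$ with $\Theta(\mathbf d)=0$, and $0\ne\mathbf n\in\mathbb{N}Q_0$. Let $\kappa$ be a positive functional and $C$ a positive integer with $\kappa(\mathbf d)<C\cdot\gcd(\Theta)$, and form $(\widehat Q,\widehat{\mathbf d},\widehat\Theta)$ as below. Then $\widehat{\mathbf d}$ is $\widehat\Theta$-coprime, and a representation $(V,f)$ of $\widehat Q$ of dimension vector $\widehat{\mathbf d}$ is $\widehat\Theta$-semistable if and only if $V$ is $\Theta$-semistable and $\Theta(\mathbf{dim}U)<0$ for every proper subrepresentation $U\subsetneq V$ containing the image of $f$, i.e. satisfying $\mathrm{Im}(f_i)\subseteq U_i\subseteq V_i$ for all $i\in Q_0$.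
   Context: Quiver representations, subrepresentations, dimension vectors, and $\Theta$-semistability for $\Theta(\mathbf{dim}V)=0$ (namely $\Theta(\mathbf{dim}U)\le 0$ for all subrepresentations $U$) are as usual. A positive functional is $\kappa\in(\mathbb{Z}Q_0)^*$ with $\kappa(\mathbf e)>0$ for all $0\ne\mathbf e\in\mathbb{N}Q_0$; $\gcd(\Theta)$ is the gcd of the coordinates $\Theta_i$. A dimension vector $\mathbf d$ is $\Theta$-coprime if $\Theta(\mathbf e)\ne0$ for all $0\ne\mathbf e\le\mathbf d$, $\mathbf e\neq\mathbf d$ (componentwise). Framing construction: $\widehat Q$ has vertices $Q_0\cup\{0\}$, the arrows of $Q$, and $n_i$ additional arrows $0\to i$ for each $i\in Q_0$; $\widehat d_i=d_i$ for $i\in Q_0$ and $\widehat d_0=1$; $\widehat\Theta_i=C\Theta_i-\kappa_i$ for $i\in Q_0$ and $\widehat\Theta_0=\kappa(\mathbf d)$. A representation of $\widehat Q$ of dimension vector $\widehat{\mathbf d}$ is identified with a pair $(V,f)$ where $V$ is a representation of $Q$ of dimension vector $\mathbf d$ and $f=(f_i:\mathbb{C}^{n_i}\to V_i)_{i\in Q_0}$. *)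

theory Defs
  imports Complex_Main "HOL-Library.Function_Algebras"
begin

text \<open>We model C^n as the functions nat => complex vanishing at all indices >= n,
  inside the complex vector space of all functions nat => complex (pointwise operations).\<close>

definition fscale :: "complex \<Rightarrow> (nat \<Rightarrow> complex) \<Rightarrow> (nat \<Rightarrow> complex)" where
  "fscale c v = (\<lambda>j. c * v j)"

lemma vector_space_fscale: "vector_space fscale"
  by unfold_locales (auto simp: fscale_def algebra_simps)

definition cvs :: "nat \<Rightarrow> (nat \<Rightarrow> complex) set" where
  "cvs n = {v. \<forall>j\<ge>n. v j = 0}"

abbreviation csubspace :: "(nat \<Rightarrow> complex) set \<Rightarrow> bool" where
  "csubspace \<equiv> module.subspace fscale"

abbreviation cdim :: "(nat \<Rightarrow> complex) set \<Rightarrow> nat" where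
  "cdim \<equiv> vector_space.dim fscale"

text \<open>Linear map C^m -> C^n given by an n x m matrix (entries outside range ignored).\<close>
definition mat_app :: "nat \<Rightarrow> nat \<Rightarrow> (nat \<Rightarrow> nat \<Rightarrow> complex) \<Rightarrow> (nat \<Rightarrow> complex) \<Rightarrow> (nat \<Rightarrow> complex)" where
  "mat_app n m M v = (\<lambda>j. if j < n then (\<Sum>k<m. M j k * v k) else 0)"

text \<open>A quiver: vertex set = UNIV of a finite type 'v, arrow set A, source s, target t.\<close>

definition acyclic_quiver :: "'a set \<Rightarrow> ('a \<Rightarrow> 'v) \<Rightarrow> ('a \<Rightarrow> 'v) \<Rightarrow> bool" where
  "acyclic_quiver A s t \<longleftrightarrow> acyclic {(s a, t a) | a. a \<in> A}"

text \<open>A representation of dimension vector d: for each arrow a a matrix M a giving a linear map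
  C^(d (s a)) -> C^(d (t a)).\<close>

definition subrep :: "'a set \<Rightarrow> ('a \<Rightarrow> 'v) \<Rightarrow> ('a \<Rightarrow> 'v) \<Rightarrow> ('v \<Rightarrow> nat)
    \<Rightarrow> ('a \<Rightarrow> nat \<Rightarrow> nat \<Rightarrow> complex) \<Rightarrow> ('v \<Rightarrow> (nat \<Rightarrow> complex) set) \<Rightarrow> bool" where
  "subrep A s t d M U \<longleftrightarrow>
     (\<forall>i. csubspace (U i) \<and> U i \<subseteq> cvs (d i)) \<and>
     (\<forall>a\<in>A. \<forall>v\<in>U (s a). mat_app (d (t a)) (d (s a)) (M a) v \<in> U (t a))"

definition dimvec :: "('v \<Rightarrow> (nat \<Rightarrow> complex) set) \<Rightarrow> ('v \<Rightarrow> nat)" where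
  "dimvec U = (\<lambda>i. cdim (U i))"

definition fval :: "('v::finite \<Rightarrow> int) \<Rightarrow> ('v \<Rightarrow> nat) \<Rightarrow> int" where
  "fval \<Theta> e = (\<Sum>i\<in>UNIV. \<Theta> i * int (e i))"

definition semistable :: "'a set \<Rightarrow> ('a \<Rightarrow> 'v) \<Rightarrow> ('a \<Rightarrow> 'v) \<Rightarrow> ('v::finite \<Rightarrow> nat)
    \<Rightarrow> ('v \<Rightarrow> int) \<Rightarrow> ('a \<Rightarrow> nat \<Rightarrow> nat \<Rightarrow> complex) \<Rightarrow> bool" where
  "semistable A s t d \<Theta> M \<longleftrightarrow> (\<forall>U. subrep A s t d M U \<longrightarrow> fval \<Theta> (dimvec U) \<le> 0)"

definition positive_functional :: "('v::finite \<Rightarrow> int) \<Rightarrow> bool" where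
  "positive_functional \<kappa> \<longleftrightarrow> (\<forall>e. e \<noteq> (\<lambda>_. 0) \<longrightarrow> fval \<kappa> e > 0)"

definition theta_coprime :: "('v::finite \<Rightarrow> int) \<Rightarrow> ('v \<Rightarrow> nat) \<Rightarrow> bool" where
  "theta_coprime \<Theta> d \<longleftrightarrow>
     (\<forall>e. e \<noteq> (\<lambda>_. 0) \<and> (\<forall>i. e i \<le> d i) \<and> e \<noteq> d \<longrightarrow> fval \<Theta> e \<noteq> 0)"

definition gcd_fun :: "('v \<Rightarrow> int) \<Rightarrow> int" where
  "gcd_fun \<Theta> = Gcd (range \<Theta>)"

text \<open>Vertices of the framed quiver: 'v option, None being the new vertex 0.
  Arrows: Inl a for the arrows of Q, Inr (i,k) with k < n i for the n i new arrows 0 -> i.\<close>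

definition fr_arrows :: "'a set \<Rightarrow> ('v \<Rightarrow> nat) \<Rightarrow> ('a + ('v \<times> nat)) set" where
  "fr_arrows A n = Inl ` A \<union> {Inr (i, k) | i k. k < n i}"

fun fr_src :: "('a \<Rightarrow> 'v) \<Rightarrow> ('a + ('v \<times> nat)) \<Rightarrow> 'v option" where
  "fr_src s (Inl a) = Some (s a)"
| "fr_src s (Inr _) = None"

fun fr_tgt :: "('a \<Rightarrow> 'v) \<Rightarrow> ('a + ('v \<times> nat)) \<Rightarrow> 'v option" where
  "fr_tgt t (Inl a) = Some (t a)"
| "fr_tgt t (Inr (i, _)) = Some i"

definition fr_dim :: "('v \<Rightarrow> nat) \<Rightarrow> ('v option \<Rightarrow> nat)" where
  "fr_dim d = (\<lambda>x. case x of None \<Rightarrow> 1 | Some i \<Rightarrow> d i)"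

definition fr_theta :: "int \<Rightarrow> ('v::finite \<Rightarrow> int) \<Rightarrow> ('v \<Rightarrow> int) \<Rightarrow> ('v \<Rightarrow> nat) \<Rightarrow> ('v option \<Rightarrow> int)" where
  "fr_theta C \<Theta> \<kappa> d = (\<lambda>x. case x of None \<Rightarrow> fval \<kappa> d | Some i \<Rightarrow> C * \<Theta> i - \<kappa> i)"

text \<open>The representation (V,f) of the framed quiver: V given by matrices M, and
  f i a d_i x n_i matrix, the k-th new arrow 0 -> i acting by the k-th column of f i.\<close>

fun fr_rep :: "('a \<Rightarrow> nat \<Rightarrow> nat \<Rightarrow> complex) \<Rightarrow> ('v \<Rightarrow> nat \<Rightarrow> nat \<Rightarrow> complex)
    \<Rightarrow> ('a + ('v \<times> nat)) \<Rightarrow> nat \<Rightarrow> nat \<Rightarrow> complex" where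
  "fr_rep M f (Inl a) = M a"
| "fr_rep M f (Inr (i, k)) = (\<lambda>j l. f i j k)"

definition img_f :: "('v \<Rightarrow> nat) \<Rightarrow> ('v \<Rightarrow> nat) \<Rightarrow> ('v \<Rightarrow> nat \<Rightarrow> nat \<Rightarrow> complex) \<Rightarrow> 'v \<Rightarrow> (nat \<Rightarrow> complex) set" where
  "img_f d n f i = mat_app (d i) (n i) (f i) ` cvs (n i)"

end

theory Submission
  imports Defs
begin


interpretation V: vector_space fscale by (rule vector_space_fscale)

lemma sum_fun_apply: "(sum F A) x = (\<Sum>a\<in>A. F a x)"
  by (induction A rule: infinite_finite_induct) auto

definition ev :: "nat \<Rightarrow> nat \<Rightarrow> complex" where "ev j = (\<lambda>k. if k = j then 1 else 0)"

lemma cvs_subspace: "csubspace (cvs m)"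
  unfolding V.subspace_def cvs_def fscale_def by auto

lemma span_ev_le: "V.span (ev ` {..<m}) \<subseteq> cvs m"
  by (rule V.span_minimal[OF _ cvs_subspace]) (auto simp: ev_def cvs_def)

lemma cvs_le_span: "cvs m \<subseteq> V.span (ev ` {..<m})"
proof
  fix v assume v: "v \<in> cvs m"
  have "v = (\<Sum>j<m. fscale (v j) (ev j))"
  proof
    fix k show "v k = (\<Sum>j<m. fscale (v j) (ev j)) k"
      using v by (auto simp: sum_fun_apply fscale_def ev_def cvs_def if_distrib cong: if_cong)
  qed
  also have "\<dots> \<in> V.span (ev ` {..<m})"
    by (intro V.span_sum V.span_scale V.span_base) auto
  finally show "v \<in> V.span (ev ` {..<m})" .
qed

lemma ev_indep: "V.independent (ev ` {..<m})"
proof (induction m)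
  case 0 then show ?case by (simp add: V.independent_empty)
next
  case (Suc m)
  have "ev m \<notin> V.span (ev ` {..<m})"
  proof
    assume "ev m \<in> V.span (ev ` {..<m})"
    then have "ev m \<in> cvs m" using span_ev_le by blast
    then have "ev m m = 0" by (simp add: cvs_def)
    then show False by (simp add: ev_def)
  qed
  then have "V.independent (insert (ev m) (ev ` {..<m}))"
    using Suc V.independent_insertI by blast
  moreover have "ev ` {..<Suc m} = insert (ev m) (ev ` {..<m})" by (auto simp: lessThan_Suc)
  ultimately show ?case by simp
qed

lemma inj_ev: "inj ev"
  unfolding inj_def ev_def by (metis zero_neq_one)

lemma card_ev: "card (ev ` {..<m}) = m"
  using inj_ev by (simp add: card_image inj_on_subset)

lemma dim_cvs: "cdim (cvs m) = m"
  by (rule V.dim_unique[OF _ cvs_le_span ev_indep card_ev]) (auto simp: ev_def cvs_def)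

lemma dim_le: "U \<subseteq> cvs m \<Longrightarrow> cdim U \<le> m"
  using V.dim_le_card[of U "ev ` {..<m}"] cvs_le_span card_ev by fastforce

lemma dim_full:
  assumes "csubspace U" "U \<subseteq> cvs m" "cdim U = m" shows "U = cvs m"
proof (rule ccontr)
  assume "U \<noteq> cvs m"
  then obtain w where w: "w \<in> cvs m" "w \<notin> U" using assms by blast
  obtain B where B: "B \<subseteq> U" "V.independent B" "U \<subseteq> V.span B" "card B = cdim U"
    using V.basis_exists by blast
  have "V.span B \<subseteq> U" using B assms(1) V.span_minimal by blast
  then have "w \<notin> V.span B" using w by blast
  then have ind: "V.independent (insert w B)" using B V.independent_insertI by blast
  have sp: "insert w B \<subseteq> V.span (ev ` {..<m})" using w B assms cvs_le_span by blast
  have fe: "finite (ev ` {..<m})" by simp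
  have fc: "finite (insert w B) \<and> card (insert w B) \<le> card (ev ` {..<m})"
    by (rule V.independent_span_bound[OF fe ind sp])
  then have fB: "finite B" by simp
  have "w \<notin> B" using w B by blast
  then have "card (insert w B) = Suc (card B)" using fB by simp
  then show False using fc B assms card_ev by simp
qed

lemma dim_zero: "cdim {0} = 0"
  using V.dim_le_card[of "{0}" "{}"] by simp



lemma fval_opt:
  "fval (fr_theta C \<Theta> \<kappa> d) e = C * fval \<Theta> (e \<circ> Some) - fval \<kappa> (e \<circ> Some) + int (e None) * fval \<kappa> d"
proof -
  have "fval (fr_theta C \<Theta> \<kappa> d) e = fval \<kappa> d * int (e None) + (\<Sum>i\<in>UNIV. (C * \<Theta> i - \<kappa> i) * int (e (Some i)))"
    unfolding fval_def[of "fr_theta C \<Theta> \<kappa> d"] UNIV_option_conv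
    by (subst sum.insert) (auto simp: sum.reindex fr_theta_def)
  also have "(\<Sum>i\<in>UNIV. (C * \<Theta> i - \<kappa> i) * int (e (Some i))) = C * fval \<Theta> (e \<circ> Some) - fval \<kappa> (e \<circ> Some)"
    unfolding fval_def by (simp add: sum_subtractf sum_distrib_left algebra_simps)
  finally show ?thesis by simp
qed

lemma fval_diff:
  assumes "\<And>i. e i \<le> d i"
  shows "fval \<kappa> d - fval \<kappa> e = fval \<kappa> (\<lambda>i. d i - e i)"
  unfolding fval_def using assms by (simp add: sum_subtractf[symmetric] algebra_simps of_nat_diff)

lemma pos_fun_pos: "positive_functional \<kappa> \<Longrightarrow> \<kappa> i > 0"
proof -
  assume p: "positive_functional \<kappa>"
  let ?e = "\<lambda>j. if j = i then 1 else (0::nat)"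
  have "?e \<noteq> (\<lambda>_. 0)" by (metis one_neq_zero)
  then have "fval \<kappa> ?e > 0" using p unfolding positive_functional_def by blast
  moreover have "fval \<kappa> ?e = \<kappa> i" unfolding fval_def by (simp add: if_distrib cong: if_cong)
  ultimately show ?thesis by simp
qed

lemma pos_fun_nonneg: "positive_functional \<kappa> \<Longrightarrow> fval \<kappa> e \<ge> 0"
  unfolding fval_def by (intro sum_nonneg) (simp add: less_imp_le pos_fun_pos)

lemma pos_fun_mono: "positive_functional \<kappa> \<Longrightarrow> (\<And>i. e i \<le> d i) \<Longrightarrow> fval \<kappa> e \<le> fval \<kappa> d"
  using fval_diff[of e d \<kappa>] pos_fun_nonneg[of \<kappa> "\<lambda>i. d i - e i"] by simp

lemma pos_fun_strict: "positive_functional \<kappa> \<Longrightarrow> (\<And>i. e i \<le> d i) \<Longrightarrow> e \<noteq> d \<Longrightarrow> fval \<kappa> e < fval \<kappa> d"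
proof -
  assume p: "positive_functional \<kappa>" and le: "\<And>i. e i \<le> d i" and ne: "e \<noteq> d"
  have "(\<lambda>i. d i - e i) \<noteq> (\<lambda>_. 0)"
  proof
    assume "(\<lambda>i. d i - e i) = (\<lambda>_. 0)"
    then have "\<And>i. d i - e i = 0" by metis
    then have "e = d" using le by (intro ext) (metis diff_is_0_eq le_antisym)
    then show False using ne by simp
  qed
  then have "fval \<kappa> (\<lambda>i. d i - e i) > 0" using p unfolding positive_functional_def by blast
  then show ?thesis using fval_diff[of e d \<kappa>] le by simp
qed

lemma gcd_pos: "\<Theta> \<noteq> (\<lambda>_. 0) \<Longrightarrow> gcd_fun \<Theta> > 0"
proof -
  assume "\<Theta> \<noteq> (\<lambda>_. 0)"
  then have "Gcd (range \<Theta>) \<noteq> 0" by (auto simp: Gcd_0_iff)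
  moreover have "Gcd (range \<Theta>) \<ge> 0" by (rule Gcd_int_greater_eq_0)
  ultimately show ?thesis unfolding gcd_fun_def by linarith
qed

lemma gcd_dvd_fval: "gcd_fun \<Theta> dvd fval \<Theta> e"
  unfolding fval_def gcd_fun_def by (intro dvd_sum dvd_mult2 Gcd_dvd) auto

lemma K1:
  fixes g x C k :: int
  assumes "C > 0" "g > 0" "g dvd x" "C * x \<le> k" "k < C * g" shows "x \<le> 0"
proof -
  obtain q where q: "x = g * q" using assms(3) by blast
  have "C * x < C * g" using assms(4,5) by linarith
  then have "x < g" using assms(1) by (metis mult_less_cancel_left_pos)
  then have "q < 1" using q assms(2) by (metis mult.right_neutral mult_less_cancel_left_pos)
  then show ?thesis using q assms(2) by (simp add: mult_nonneg_nonpos)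
qed

lemma K2:
  fixes g x C :: int
  assumes "C > 0" "g > 0" "g dvd x" "x < 0" shows "C * x \<le> - (C * g)"
proof -
  obtain q where q: "x = g * q" using assms(3) by blast
  then have "q < 0" using assms by (simp add: zero_less_mult_iff mult_less_0_iff)
  then have "q \<le> -1" by simp
  then have "g * q \<le> - g" using assms(2) by (metis mult.right_neutral mult_left_mono mult_minus_right less_imp_le)
  then show ?thesis using q assms(1) by (metis mult_left_mono mult_minus_right less_imp_le)
qed



lemma S1:
  assumes "subrep (fr_arrows A n) (fr_src s) (fr_tgt t) (fr_dim d) (fr_rep M f) W"
  shows "subrep A s t d M (W \<circ> Some)"
  using assms unfolding subrep_def
proof (intro conjI allI ballI)
  fix i show "csubspace ((W \<circ> Some) i)"
    using assms unfolding subrep_def fr_dim_def by (metis comp_apply)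
next
  fix i show "(W \<circ> Some) i \<subseteq> cvs (d i)"
    using assms unfolding subrep_def fr_dim_def by (metis comp_apply option.simps(5))
next
  fix a v assume a: "a \<in> A" and v: "v \<in> (W \<circ> Some) (s a)"
  have "Inl a \<in> fr_arrows A n" using a by (simp add: fr_arrows_def)
  then show "mat_app (d (t a)) (d (s a)) (M a) v \<in> (W \<circ> Some) (t a)"
    using assms v unfolding subrep_def fr_dim_def by fastforce
qed

lemma zero_space:
  assumes "csubspace U0" "U0 \<subseteq> cvs 1" shows "U0 = {0} \<or> U0 = cvs 1"
proof (cases "\<exists>v\<in>U0. v 0 \<noteq> 0")
  case True
  then obtain v where v: "v \<in> U0" "v 0 \<noteq> 0" by blast
  have "cvs 1 \<subseteq> U0"
  proof
    fix w assume w: "w \<in> cvs 1"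
    have "w = fscale (w 0 / v 0) v"
    proof
      fix j show "w j = fscale (w 0 / v 0) v j"
      proof (cases "j = 0")
        case False
        then have "w j = 0" "v j = 0" using w v assms(2) by (auto simp: cvs_def)
        then show ?thesis by (simp add: fscale_def)
      qed (use v in \<open>simp add: fscale_def\<close>)
    qed
    then show "w \<in> U0" using V.subspace_scale[OF assms(1) v(1)] by metis
  qed
  then show ?thesis using assms by blast
next
  case False
  have "U0 \<subseteq> {0}"
  proof
    fix v assume "v \<in> U0"
    then have "v 0 = 0" "\<forall>j\<ge>1. v j = 0" using False assms(2) by (auto simp: cvs_def)
    then have "v = 0" by (intro ext) (metis less_one not_less zero_fun_apply)
    then show "v \<in> {0}" by simp
  qed
  then show ?thesis using V.subspace_0[OF assms(1)] by blast
qed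

lemma S2:
  assumes "subrep (fr_arrows A n) (fr_src s) (fr_tgt t) (fr_dim d) (fr_rep M f) W"
    and "W None = cvs 1"
  shows "img_f d n f i \<subseteq> W (Some i)"
proof
  fix x assume "x \<in> img_f d n f i"
  then obtain w where w: "w \<in> cvs (n i)" and x: "x = mat_app (d i) (n i) (f i) w"
    by (auto simp: img_f_def)
  define u1 :: "nat \<Rightarrow> complex" where "u1 = (\<lambda>j. if j = 0 then 1 else 0)"
  have u1: "u1 \<in> W None" using assms(2) by (simp add: u1_def cvs_def)
  have sub: "csubspace (W (Some i))" using assms(1) unfolding subrep_def by blast
  have col: "mat_app (d i) 1 (\<lambda>j l. f i j k) u1 \<in> W (Some i)" if "k < n i" for k
  proof -
    have "Inr (i, k) \<in> fr_arrows A n" using that by (simp add: fr_arrows_def)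
    then show ?thesis using assms(1) u1 unfolding subrep_def by (fastforce simp: fr_dim_def)
  qed
  have "x = (\<Sum>k<n i. fscale (w k) (mat_app (d i) 1 (\<lambda>j l. f i j k) u1))"
  proof
    fix j show "x j = (\<Sum>k<n i. fscale (w k) (mat_app (d i) 1 (\<lambda>j l. f i j k) u1)) j"
      by (simp add: x sum_fun_apply fscale_def mat_app_def u1_def mult.commute)
  qed
  also have "\<dots> \<in> W (Some i)"
    by (intro V.subspace_sum[OF sub] V.subspace_scale[OF sub] col) auto
  finally show "x \<in> W (Some i)" .
qed

lemma zero_subspace: "csubspace {0}"
  unfolding V.subspace_def by (auto simp: fscale_def)

lemma mat_app_0: "mat_app a b N 0 = 0"
  by (auto simp: mat_app_def)

lemma S3:
  assumes "subrep A s t d M U"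
  shows "subrep (fr_arrows A n) (fr_src s) (fr_tgt t) (fr_dim d) (fr_rep M f)
           (\<lambda>x. case x of None \<Rightarrow> {0} | Some i \<Rightarrow> U i)"
  unfolding subrep_def
proof (intro conjI allI ballI)
  fix x :: "'b option"
  show "csubspace (case x of None \<Rightarrow> {0} | Some i \<Rightarrow> U i)"
    using assms zero_subspace cvs_subspace unfolding subrep_def
    by (cases x) (auto simp: fr_dim_def cvs_def)
next
  fix x :: "'b option"
  show "(case x of None \<Rightarrow> {0} | Some i \<Rightarrow> U i) \<subseteq> cvs (fr_dim d x)"
    using assms zero_subspace unfolding subrep_def
    by (cases x) (auto simp: fr_dim_def cvs_def)
next
  fix a v assume a: "a \<in> fr_arrows A n"
    and v: "v \<in> (case fr_src s a of None \<Rightarrow> {0} | Some i \<Rightarrow> U i)"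
  show "mat_app (fr_dim d (fr_tgt t a)) (fr_dim d (fr_src s a)) (fr_rep M f a) v
          \<in> (case fr_tgt t a of None \<Rightarrow> {0} | Some i \<Rightarrow> U i)"
  proof (cases a)
    case (Inl b)
    then show ?thesis using a v assms unfolding subrep_def by (auto simp: fr_arrows_def fr_dim_def)
  next
    case (Inr p)
    then obtain i k where p: "a = Inr (i, k)" by (cases p) auto
    have "csubspace (U i)" using assms unfolding subrep_def by blast
    then show ?thesis using v p by (simp add: mat_app_0 V.subspace_0)
  qed
qed

lemma S4:
  assumes "subrep A s t d M U" "\<forall>i. img_f d n f i \<subseteq> U i"
  shows "subrep (fr_arrows A n) (fr_src s) (fr_tgt t) (fr_dim d) (fr_rep M f)
           (\<lambda>x. case x of None \<Rightarrow> cvs 1 | Some i \<Rightarrow> U i)"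
  unfolding subrep_def
proof (intro conjI allI ballI)
  fix x :: "'b option"
  show "csubspace (case x of None \<Rightarrow> cvs 1 | Some i \<Rightarrow> U i)"
    using assms zero_subspace cvs_subspace unfolding subrep_def
    by (cases x) (auto simp: fr_dim_def cvs_def)
next
  fix x :: "'b option"
  show "(case x of None \<Rightarrow> cvs 1 | Some i \<Rightarrow> U i) \<subseteq> cvs (fr_dim d x)"
    using assms cvs_subspace unfolding subrep_def
    by (cases x) (auto simp: fr_dim_def)
next
  fix a v assume a: "a \<in> fr_arrows A n"
    and v: "v \<in> (case fr_src s a of None \<Rightarrow> cvs 1 | Some i \<Rightarrow> U i)"
  show "mat_app (fr_dim d (fr_tgt t a)) (fr_dim d (fr_src s a)) (fr_rep M f a) v
          \<in> (case fr_tgt t a of None \<Rightarrow> cvs 1 | Some i \<Rightarrow> U i)"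
  proof (cases a)
    case (Inl b)
    then show ?thesis using a v assms unfolding subrep_def by (auto simp: fr_arrows_def fr_dim_def)
  next
    case (Inr p)
    then obtain i k where p: "a = Inr (i, k)" by (cases p) auto
    then have k: "k < n i" using a by (auto simp: fr_arrows_def)
    define w :: "nat \<Rightarrow> complex" where "w = (\<lambda>l. if l = k then v 0 else 0)"
    have w: "w \<in> cvs (n i)" using k by (auto simp: w_def cvs_def)
    have "mat_app (d i) 1 (\<lambda>j l. f i j k) v = mat_app (d i) (n i) (f i) w"
      using k by (auto simp: mat_app_def w_def if_distrib cong: if_cong)
    also have "\<dots> \<in> U i" using w assms(2) by (auto simp: img_f_def)
    finally show ?thesis using p by (simp add: fr_dim_def)
  qed
qed



lemma subrep_dims:
  assumes "subrep A s t d M U"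
  shows "\<And>i. dimvec U i \<le> d i" and "U \<noteq> (\<lambda>i. cvs (d i)) \<Longrightarrow> dimvec U \<noteq> d"
proof -
  fix i show "dimvec U i \<le> d i"
    using assms dim_le unfolding subrep_def dimvec_def by blast
next
  assume ne: "U \<noteq> (\<lambda>i. cvs (d i))"
  show "dimvec U \<noteq> d"
  proof
    assume eq: "dimvec U = d"
    have "U = (\<lambda>i. cvs (d i))"
    proof
      fix i
      have "csubspace (U i)" "U i \<subseteq> cvs (d i)" using assms unfolding subrep_def by blast+
      moreover have "cdim (U i) = d i" using fun_cong[OF eq, of i] by (simp add: dimvec_def)
      ultimately show "U i = cvs (d i)" by (rule dim_full)
    qed
    then show False using ne by simp
  qed
qed

lemma dimvec_full: "dimvec (\<lambda>i. cvs (d i)) = d"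
  by (simp add: dimvec_def dim_cvs)

context
  fixes \<Theta> \<kappa> :: "'v::finite \<Rightarrow> int" and C :: int and d :: "'v \<Rightarrow> nat"
  assumes Cp: "C > 0" and kp: "positive_functional \<kappa>" and gpos: "gcd_fun \<Theta> > 0"
    and kd0: "fval \<kappa> d < C * gcd_fun \<Theta>" and d0: "fval \<Theta> d = 0"
begin

abbreviation "g \<equiv> gcd_fun \<Theta>"
lemma g: "g > 0" by (rule gpos)
lemma gd: "g dvd fval \<Theta> e" by (rule gcd_dvd_fval)
lemma kd: "fval \<kappa> d < C * g" by (rule kd0)

lemma dimW: "dimvec W \<circ> Some = dimvec (W \<circ> Some)"
  by (auto simp: dimvec_def)

lemma coprime_part: "theta_coprime (fr_theta C \<Theta> \<kappa> d) (fr_dim d)"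
  unfolding theta_coprime_def
proof (intro allI impI)
  fix e :: "'v option \<Rightarrow> nat"
  assume H: "e \<noteq> (\<lambda>_. 0) \<and> (\<forall>i. e i \<le> fr_dim d i) \<and> e \<noteq> fr_dim d"
  let ?e = "e \<circ> Some"
  have le: "\<And>i. ?e i \<le> d i"
  proof -
    fix i have "e (Some i) \<le> fr_dim d (Some i)" using H by blast
    then show "?e i \<le> d i" by (simp add: fr_dim_def)
  qed
  have "e None \<le> fr_dim d None" using H by blast
  then have e0: "e None \<le> 1" by (simp add: fr_dim_def)
  have kle: "fval \<kappa> ?e \<le> fval \<kappa> d" using pos_fun_mono[OF kp le] .
  show "fval (fr_theta C \<Theta> \<kappa> d) e \<noteq> 0"
  proof (cases "e None = 0")
    case True
    have "?e \<noteq> (\<lambda>_. 0)"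
    proof
      assume "?e = (\<lambda>_. 0)"
      then have z: "\<And>i. e (Some i) = 0" by (simp add: fun_eq_iff)
      have "e = (\<lambda>_. 0)"
      proof
        fix x show "e x = 0" using True z by (cases x) auto
      qed
      then show False using H by simp
    qed
    then have kpos: "fval \<kappa> ?e > 0" using kp unfolding positive_functional_def by blast
    show ?thesis
    proof
      assume "fval (fr_theta C \<Theta> \<kappa> d) e = 0"
      then have eq: "C * fval \<Theta> ?e = fval \<kappa> ?e" using True by (simp add: fval_opt)
      have "C * fval \<Theta> ?e \<le> fval \<kappa> d" using eq kle by linarith
      then have "fval \<Theta> ?e \<le> 0" by (rule K1[OF Cp g gd _ kd])
      then have "C * fval \<Theta> ?e \<le> 0" using Cp by (simp add: mult_nonneg_nonpos)
      then show False using eq kpos by linarith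
    qed
  next
    case False
    then have e1: "e None = 1" using e0 by simp
    have "?e \<noteq> d"
    proof
      assume "?e = d"
      then have z: "\<And>i. e (Some i) = d i" by (simp add: fun_eq_iff)
      have "e = fr_dim d"
      proof
        fix x show "e x = fr_dim d x" using e1 z by (cases x) (auto simp: fr_dim_def)
      qed
      then show False using H by simp
    qed
    then have klt: "fval \<kappa> ?e < fval \<kappa> d" using pos_fun_strict[of \<kappa> ?e d] kp le by blast
    show ?thesis
    proof
      assume "fval (fr_theta C \<Theta> \<kappa> d) e = 0"
      then have eq: "C * fval \<Theta> ?e - fval \<kappa> ?e + fval \<kappa> d = 0" using e1 by (simp add: fval_opt)
      then have "C * fval \<Theta> ?e < 0" using klt by linarith
      then have "fval \<Theta> ?e < 0" using Cp by (simp add: mult_less_0_iff)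
      then have "C * fval \<Theta> ?e \<le> - (C * g)" using K2[OF Cp g gd] by blast
      moreover have "fval \<kappa> ?e \<ge> 0" using pos_fun_nonneg[OF kp] .
      ultimately show False using eq kd by linarith
    qed
  qed
qed

lemma fwd_part:
  fixes A :: "'a set" and s t :: "'a \<Rightarrow> 'v"
  assumes ss: "semistable (fr_arrows A n) (fr_src s) (fr_tgt t) (fr_dim d) (fr_theta C \<Theta> \<kappa> d) (fr_rep M f)"
  shows "semistable A s t d \<Theta> M \<and>
               (\<forall>U. subrep A s t d M U \<and> U \<noteq> (\<lambda>i. cvs (d i)) \<and> (\<forall>i. img_f d n f i \<subseteq> U i)
                    \<longrightarrow> fval \<Theta> (dimvec U) < 0)"
proof (intro conjI allI impI)
  show "semistable A s t d \<Theta> M"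
    unfolding semistable_def
  proof (intro allI impI)
    fix U assume U: "subrep A s t d M U"
    define W where "W = (\<lambda>x. case x of None \<Rightarrow> {0} | Some i \<Rightarrow> U i)"
    have "subrep (fr_arrows A n) (fr_src s) (fr_tgt t) (fr_dim d) (fr_rep M f) W" using S3[OF U] by (simp add: W_def)
    then have "fval (fr_theta C \<Theta> \<kappa> d) (dimvec W) \<le> 0"
      using ss unfolding semistable_def by blast
    moreover have "W \<circ> Some = U" by (auto simp: W_def)
    moreover have "dimvec W None = 0" by (simp add: W_def dimvec_def dim_zero)
    ultimately have "C * fval \<Theta> (dimvec U) - fval \<kappa> (dimvec U) \<le> 0"
      by (simp add: fval_opt dimW)
    moreover have "fval \<kappa> (dimvec U) \<le> fval \<kappa> d"
      using pos_fun_mono[of \<kappa> "dimvec U" d] kp subrep_dims(1)[OF U] by blast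
    moreover have "fval \<kappa> (dimvec U) \<ge> 0" using pos_fun_nonneg[OF kp] .
    ultimately show "fval \<Theta> (dimvec U) \<le> 0"
      using K1[OF Cp g gd[of "dimvec U"] _ kd] by linarith
  qed
next
  fix U assume H: "subrep A s t d M U \<and> U \<noteq> (\<lambda>i. cvs (d i)) \<and> (\<forall>i. img_f d n f i \<subseteq> U i)"
  then have U: "subrep A s t d M U" by blast
  define W where "W = (\<lambda>x. case x of None \<Rightarrow> cvs 1 | Some i \<Rightarrow> U i)"
  have "subrep (fr_arrows A n) (fr_src s) (fr_tgt t) (fr_dim d) (fr_rep M f) W" using S4[OF U] H by (simp add: W_def)
  then have "fval (fr_theta C \<Theta> \<kappa> d) (dimvec W) \<le> 0"
    using ss unfolding semistable_def by blast
  moreover have "W \<circ> Some = U" by (auto simp: W_def)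
  moreover have "dimvec W None = 1" by (simp add: W_def dimvec_def dim_cvs)
  ultimately have "C * fval \<Theta> (dimvec U) - fval \<kappa> (dimvec U) + fval \<kappa> d \<le> 0"
    by (simp add: fval_opt dimW)
  moreover have "fval \<kappa> (dimvec U) < fval \<kappa> d"
    using pos_fun_strict[of \<kappa> "dimvec U" d] kp subrep_dims[OF U] H by blast
  ultimately have "C * fval \<Theta> (dimvec U) < 0" by linarith
  then show "fval \<Theta> (dimvec U) < 0" using Cp by (simp add: mult_less_0_iff)
qed

lemma bwd_part:
  fixes A :: "'a set" and s t :: "'a \<Rightarrow> 'v"
  assumes R: "semistable A s t d \<Theta> M \<and>
               (\<forall>U. subrep A s t d M U \<and> U \<noteq> (\<lambda>i. cvs (d i)) \<and> (\<forall>i. img_f d n f i \<subseteq> U i)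
                    \<longrightarrow> fval \<Theta> (dimvec U) < 0)"
  shows "semistable (fr_arrows A n) (fr_src s) (fr_tgt t) (fr_dim d) (fr_theta C \<Theta> \<kappa> d) (fr_rep M f)"
  unfolding semistable_def
proof (intro allI impI)
  fix W assume W: "subrep (fr_arrows A n) (fr_src s) (fr_tgt t) (fr_dim d) (fr_rep M f) W"
  let ?U = "W \<circ> Some"
  have U: "subrep A s t d M ?U" using S1[OF W] .
  have nn: "fval \<kappa> (dimvec ?U) \<ge> 0" using pos_fun_nonneg[OF kp] .
  have "csubspace (W None) \<and> W None \<subseteq> cvs (fr_dim d None)"
    using W unfolding subrep_def by blast
  then have W0: "csubspace (W None)" "W None \<subseteq> cvs 1" by (simp_all add: fr_dim_def)
  have val: "fval (fr_theta C \<Theta> \<kappa> d) (dimvec W) =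
        C * fval \<Theta> (dimvec ?U) - fval \<kappa> (dimvec ?U) + int (dimvec W None) * fval \<kappa> d"
    by (simp add: fval_opt dimW)
  show "fval (fr_theta C \<Theta> \<kappa> d) (dimvec W) \<le> 0"
  proof (cases "W None = {0}")
    case True
    then have "dimvec W None = 0" by (simp add: dimvec_def dim_zero)
    moreover have "fval \<Theta> (dimvec ?U) \<le> 0" using R U unfolding semistable_def by blast
    then have "C * fval \<Theta> (dimvec ?U) \<le> 0" using Cp by (simp add: mult_nonneg_nonpos)
    ultimately show ?thesis using val nn by simp
  next
    case False
    then have W1: "W None = cvs 1" using zero_space[OF W0] by blast
    then have "dimvec W None = 1" by (simp add: dimvec_def dim_cvs)
    then have val': "fval (fr_theta C \<Theta> \<kappa> d) (dimvec W) =
        C * fval \<Theta> (dimvec ?U) - fval \<kappa> (dimvec ?U) + fval \<kappa> d" using val by simp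
    have img: "\<forall>i. img_f d n f i \<subseteq> ?U i" using S2[OF W W1] by simp
    show ?thesis
    proof (cases "?U = (\<lambda>i. cvs (d i))")
      case True
      then have "dimvec ?U = d" by (simp add: dimvec_full)
      then show ?thesis using val' d0 by simp
    next
      case False
      then have "fval \<Theta> (dimvec ?U) < 0" using R U img by blast
      then have "C * fval \<Theta> (dimvec ?U) \<le> - (C * g)" using K2[OF Cp g gd] by blast
      then show ?thesis using val' nn kd by linarith
    qed
  qed
qed

end

theorem lemma2p4:
  fixes A :: "'a set" and s t :: "'a \<Rightarrow> 'v::finite"
    and d n :: "'v \<Rightarrow> nat" and \<Theta> \<kappa> :: "'v \<Rightarrow> int" and C :: int
  assumes "finite A" and "acyclic_quiver A s t"
    and "\<Theta> \<noteq> (\<lambda>_. 0)" and "fval \<Theta> d = 0"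
    and "n \<noteq> (\<lambda>_. 0)"
    and "positive_functional \<kappa>" and "C > 0" and "fval \<kappa> d < C * gcd_fun \<Theta>"
  shows "theta_coprime (fr_theta C \<Theta> \<kappa> d) (fr_dim d)
    \<and> (\<forall>M f. semistable (fr_arrows A n) (fr_src s) (fr_tgt t) (fr_dim d) (fr_theta C \<Theta> \<kappa> d) (fr_rep M f)
          \<longleftrightarrow> (semistable A s t d \<Theta> M \<and>
               (\<forall>U. subrep A s t d M U \<and> U \<noteq> (\<lambda>i. cvs (d i)) \<and> (\<forall>i. img_f d n f i \<subseteq> U i)
                    \<longrightarrow> fval \<Theta> (dimvec U) < 0)))"
proof -
  have gp: "gcd_fun \<Theta> > 0" using gcd_pos[OF assms(3)] .
  show ?thesis
    using coprime_part[OF assms(7,6) gp assms(8,4)]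
      fwd_part[OF assms(7,6) gp assms(8,4)] bwd_part[OF assms(7,6) gp assms(8,4)]
    by blast
qed

end
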